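(* Let $K$ and $K'$ be two CMIs on $X_1,\dots,X_n$ (not necessarily in pure form). Then $K\sim K'$ if and only if $\mathrm{can}(\mathrm{pur}(K))=\mathrm{can}(\mathrm{pur}(K'))$.
   Context: Setting: $X_1,\dots,X_n$ are jointly distributed discrete random variables with $H(X_i)<\infty$ for all $i$; the joint distribution is otherwise unspecified. Write $\mathcal N_n=\{1,\dots,n\}$, $X_\alpha=(X_i,i\in\alpha)$, and $X_\emptyset$ is a constant. A CMI is a pair $K=(C,\langle Q_1,\dots,Q_k\rangle)$ with $k\ge0$, $C\subseteq\mathcal N_n$, $\langle Q_1,\dots,Q_k\rangle$ an unordered multiset of subsets of $\mathcal N_n$. For a given joint distribution, $K$ is valid if $\sum_{i=1}^k H(X_{Q_i}|X_C)-H(X_{Q_1},\dots,X_{Q_k}|X_C)=0$. Empty members may be deleted. Two CMIs are equal if conditioning sets and multisets coincide. $K\sim K'$ means that for every joint distribution both are valid or both invalid. Degenerate CMIs (valid for every distribution) are all identified and written $(\cdot,\langle\ \rangle)$. Pure form: $\mathrm{pur}(K)=(C,\langle Q_i\setminus C: Q_i\setminus C\ne\emptyset\rangle)$ (with multiplicity). A CMI is in pure form if all $Q_i\neq\emptyset$ and $Q_i\cap C=\emptyset$. Canonical form of a pure $K=(C,\langle Q_1,\dots,Q_k\rangle)$: if $k\ge2$, $\mathbb I_K$ is the set of indices lying in at least two members (distinct positions) of the collection; $\mathbb I_K=\emptyset$ if $k\le1$. Let $P_1,\dots,P_t$ be the nonempty sets among $Q_i\setminus\mathbb I_K$ (with multiplicity).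 Then $\mathrm{can}(K)=(\cdot,\langle\ \rangle)$ if $k\le1$; $(C,\langle\mathbb I_K,\mathbb I_K\rangle)$ if $k\ge2,\mathbb I_K\ne\emptyset,t\le1$; $(C,\langle P_1,\dots,P_t\rangle)$ if $k\ge2,\mathbb I_K=\emptyset$; $(C,\langle\mathbb I_K,\mathbb I_K,P_1,\dots,P_t\rangle)$ if $k\ge2,\mathbb I_K\ne\emptyset,t\ge2$. *)

theory Defs
  imports "HOL-Probability.Probability" "HOL-Library.Multiset"
begin

text \<open>A joint distribution of the discrete random variables X_1, X_2, ... is a
  probability mass function on outcomes \<omega> :: nat \<Rightarrow> nat, with X_i(\<omega>) = \<omega> i
  (every countable alphabet can be relabelled into nat).\<close>

type_synonym jdist = "(nat \<Rightarrow> nat) pmf"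

definition marg :: "jdist \<Rightarrow> nat set \<Rightarrow> (nat \<Rightarrow> nat) pmf" where
  "marg p \<alpha> = map_pmf (\<lambda>\<omega>. restrict \<omega> \<alpha>) p"

definition entropy_pmf :: "'a pmf \<Rightarrow> ennreal" where
  "entropy_pmf q = (\<integral>\<^sup>+ x. ennreal (- log 2 (pmf q x)) \<partial>measure_pmf q)"

definition H :: "jdist \<Rightarrow> nat set \<Rightarrow> real" where
  "H p \<alpha> = enn2real (entropy_pmf (marg p \<alpha>))"

definition condH :: "jdist \<Rightarrow> nat set \<Rightarrow> nat set \<Rightarrow> real" where
  "condH p A C = H p (A \<union> C) - H p C"

definition admissible :: "nat \<Rightarrow> jdist \<Rightarrow> bool" where
  "admissible n p \<longleftrightarrow> (\<forall>i \<in> {1..n}. entropy_pmf (marg p {i}) < \<infinity>)"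

text \<open>A CMI (C, <Q_1,...,Q_k>).\<close>
type_synonym cmi = "nat set \<times> nat set multiset"

definition is_cmi :: "nat \<Rightarrow> cmi \<Rightarrow> bool" where
  "is_cmi n K \<longleftrightarrow> fst K \<subseteq> {1..n} \<and> (\<forall>Q \<in># snd K. Q \<subseteq> {1..n})"

text \<open>Validity: sum_i H(X_{Q_i}|X_C) - H(X_{Q_1},...,X_{Q_k}|X_C) = 0.
  The joint variable (X_{Q_1},...,X_{Q_k}) carries the same information as X_{Q_1 \<union> ... \<union> Q_k}.\<close>
definition valid :: "jdist \<Rightarrow> cmi \<Rightarrow> bool" where
  "valid p K \<longleftrightarrow>
     (\<Sum>Q \<in># snd K. condH p Q (fst K)) - condH p (\<Union>(set_mset (snd K))) (fst K) = 0"

definition cmi_equiv :: "nat \<Rightarrow> cmi \<Rightarrow> cmi \<Rightarrow> bool" where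
  "cmi_equiv n K K' \<longleftrightarrow> (\<forall>p. admissible n p \<longrightarrow> (valid p K \<longleftrightarrow> valid p K'))"

definition pur :: "cmi \<Rightarrow> cmi" where
  "pur K = (fst K, filter_mset (\<lambda>Q. Q \<noteq> {}) (image_mset (\<lambda>Q. Q - fst K) (snd K)))"

definition II :: "nat set multiset \<Rightarrow> nat set" where
  "II Qs = {i. size (filter_mset (\<lambda>Q. i \<in> Q) Qs) \<ge> 2}"

text \<open>Canonical form; None represents the degenerate CMI (\<cdot>, < >).\<close>
definition can :: "cmi \<Rightarrow> cmi option" where
  "can K = (let C = fst K; Qs = snd K; I = (if size Qs \<le> 1 then {} else II Qs);
               Ps = filter_mset (\<lambda>P. P \<noteq> {}) (image_mset (\<lambda>Q. Q - I) Qs) in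
     if size Qs \<le> 1 then None
     else if I \<noteq> {} \<and> size Ps \<le> 1 then Some (C, {#I, I#})
     else if I = {} then Some (C, Ps)
     else Some (C, {#I, I#} + Ps))"

end

theory Submission
  imports Defs
begin


definition PS :: "jdist \<Rightarrow> nat set \<Rightarrow> (nat \<Rightarrow> nat) \<Rightarrow> real" where
  "PS p S \<omega> = measure_pmf.prob p {\<omega>'. restrict \<omega>' S = restrict \<omega> S}"

definition aS :: "jdist \<Rightarrow> nat set \<Rightarrow> (nat \<Rightarrow> nat) \<Rightarrow> real" where
  "aS p S \<omega> = - log 2 (PS p S \<omega>)"

lemma pmf_marg: "pmf (marg p S) (restrict \<omega> S) = PS p S \<omega>"
  unfolding marg_def PS_def pmf_map by (simp add: vimage_def)

lemma entropy_marg: "entropy_pmf (marg p S) = (\<integral>\<^sup>+\<omega>. ennreal (aS p S \<omega>) \<partial>p)"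
  unfolding entropy_pmf_def aS_def by (simp add: pmf_marg[symmetric]) (simp add: marg_def)

lemma H_integral: "H p S = (\<integral>\<omega>. aS p S \<omega> \<partial>p)"
proof -
  have "AE \<omega> in p. 0 \<le> aS p S \<omega>"
    unfolding AE_measure_pmf_iff
  proof
    fix \<omega> assume "\<omega> \<in> set_pmf p"
    then have "PS p S \<omega> > 0" unfolding PS_def by (intro measure_pmf_posI) auto
    moreover have "PS p S \<omega> \<le> 1" unfolding PS_def by simp
    ultimately show "0 \<le> aS p S \<omega>" unfolding aS_def by simp
  qed
  then show ?thesis unfolding H_def entropy_marg by (subst integral_eq_nn_integral) auto
qed

lemma PS_pos: "\<omega> \<in> set_pmf p \<Longrightarrow> PS p S \<omega> > 0"
  unfolding PS_def by (intro measure_pmf_posI) auto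

lemma PS_le1: "PS p S \<omega> \<le> 1"
  unfolding PS_def by simp

lemma aS_nonneg: "\<omega> \<in> set_pmf p \<Longrightarrow> 0 \<le> aS p S \<omega>"
  using PS_pos[of \<omega> p S] PS_le1[of p S \<omega>] unfolding aS_def by simp

lemma PS_mono: "A \<subseteq> B \<Longrightarrow> PS p B \<omega> \<le> PS p A \<omega>"
  unfolding PS_def
proof (rule measure_pmf.finite_measure_mono)
  assume "A \<subseteq> B"
  show "{\<omega>'. restrict \<omega>' B = restrict \<omega> B} \<subseteq> {\<omega>'. restrict \<omega>' A = restrict \<omega> A}"
  proof
    fix x assume "x \<in> {\<omega>'. restrict \<omega>' B = restrict \<omega> B}"
    then have "\<forall>i. restrict x B i = restrict \<omega> B i" by simp
    then have "\<forall>i. restrict x A i = restrict \<omega> A i" using \<open>A \<subseteq> B\<close>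
      by (auto simp: restrict_def split: if_splits)
    then show "x \<in> {\<omega>'. restrict \<omega>' A = restrict \<omega> A}" by auto
  qed
qed auto

lemma aS_mono: "A \<subseteq> B \<Longrightarrow> \<omega> \<in> set_pmf p \<Longrightarrow> aS p A \<omega> \<le> aS p B \<omega>"
  unfolding aS_def using PS_mono[of A B p \<omega>] PS_pos[of \<omega> p B] by simp

lemma restrict_restrict_sub: "S \<subseteq> T \<Longrightarrow> restrict (restrict \<omega> T) S = restrict \<omega> S"
  by (auto simp: restrict_def fun_eq_iff)

lemma PS_restrict: "S \<subseteq> T \<Longrightarrow> PS p S (restrict \<omega> T) = PS p S \<omega>"
  unfolding PS_def by (simp add: restrict_restrict_sub Int_absorb1 Int_absorb2)

lemma nn_integral_ge_point:
  "ennreal (pmf M x0) * f x0 \<le> (\<integral>\<^sup>+x. f x \<partial>measure_pmf M)"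
proof -
  have "(\<integral>\<^sup>+x. f x * indicator {x0} x \<partial>measure_pmf M) \<le> (\<integral>\<^sup>+x. f x \<partial>measure_pmf M)"
    by (intro nn_integral_mono) (auto split: split_indicator)
  moreover have "(\<integral>\<^sup>+x. f x * indicator {x0} x \<partial>measure_pmf M) = f x0 * ennreal (pmf M x0)"
    by (simp add: emeasure_pmf_single)
  ultimately show ?thesis by (simp add: mult.commute)
qed

definition glue :: "jdist \<Rightarrow> nat set \<Rightarrow> nat set \<Rightarrow> (nat \<Rightarrow> nat) pmf" where
  "glue p A B = bind_pmf (marg p A) (\<lambda>x. map_pmf (\<lambda>y. \<lambda>i. if i \<in> A then x i else y i)
      (cond_pmf (marg p B) {y. restrict y (A \<inter> B) = restrict x (A \<inter> B)}))"

lemma glue_lower: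
  assumes "\<omega> \<in> set_pmf p"
  shows "PS p A \<omega> * (PS p B \<omega> / PS p (A \<inter> B) \<omega>) \<le> pmf (glue p A B) (restrict \<omega> (A \<union> B))"
proof -
  define x0 where "x0 = restrict \<omega> A"
  define y0 where "y0 = restrict \<omega> B"
  define S0 where "S0 = {y. restrict y (A \<inter> B) = restrict x0 (A \<inter> B)}"
  define mrg where "mrg = (\<lambda>x y. \<lambda>i::nat. if i \<in> A then x i else (y i::nat))"
  define F where "F = (\<lambda>x. map_pmf (mrg x)
      (cond_pmf (marg p B) {y. restrict y (A \<inter> B) = restrict x (A \<inter> B)}))"
  have gl: "glue p A B = bind_pmf (marg p A) F" unfolding glue_def F_def mrg_def by simp
  have y0S: "y0 \<in> S0" unfolding S0_def y0_def x0_def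
    by (auto simp: restrict_def fun_eq_iff)
  have y0set: "y0 \<in> set_pmf (marg p B)" unfolding y0_def marg_def using assms by auto
  have ne: "set_pmf (marg p B) \<inter> S0 \<noteq> {}" using y0S y0set by auto
  have mS0: "measure_pmf.prob (marg p B) S0 = PS p (A \<inter> B) \<omega>"
    unfolding marg_def measure_map_pmf PS_def S0_def x0_def
    by (simp add: vimage_def restrict_restrict_sub Int_absorb1 Int_absorb2)
  have mrg0: "mrg x0 y0 = restrict \<omega> (A \<union> B)"
    unfolding mrg_def x0_def y0_def by (auto simp: restrict_def fun_eq_iff)
  have "pmf (F x0) (restrict \<omega> (A \<union> B)) = measure_pmf.prob (cond_pmf (marg p B) S0) (mrg x0 -` {restrict \<omega> (A \<union> B)})"
    unfolding F_def pmf_map S0_def by simp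
  also have "\<dots> \<ge> measure_pmf.prob (cond_pmf (marg p B) S0) {y0}"
    using mrg0 by (intro measure_pmf.finite_measure_mono) auto
  finally have "pmf (F x0) (restrict \<omega> (A \<union> B)) \<ge> pmf (cond_pmf (marg p B) S0) y0"
    by (simp add: measure_pmf_single)
  moreover have "pmf (cond_pmf (marg p B) S0) y0 = PS p B \<omega> / PS p (A \<inter> B) \<omega>"
    using pmf_cond[OF ne, of y0] y0S mS0 by (simp add: y0_def pmf_marg)
  ultimately have F0: "PS p B \<omega> / PS p (A \<inter> B) \<omega> \<le> pmf (F x0) (restrict \<omega> (A \<union> B))" by simp
  have "ennreal (pmf (marg p A) x0) * ennreal (pmf (F x0) (restrict \<omega> (A \<union> B)))
        \<le> ennreal (pmf (glue p A B) (restrict \<omega> (A \<union> B)))"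
    unfolding gl ennreal_pmf_bind by (rule nn_integral_ge_point)
  then have "pmf (marg p A) x0 * pmf (F x0) (restrict \<omega> (A \<union> B)) \<le> pmf (glue p A B) (restrict \<omega> (A \<union> B))"
    by (simp add: ennreal_mult'[symmetric])
  moreover have "pmf (marg p A) x0 = PS p A \<omega>" unfolding x0_def by (rule pmf_marg)
  moreover have nn: "0 \<le> PS p A \<omega>" using PS_pos[OF assms, of A] by simp
  moreover have "PS p A \<omega> * (PS p B \<omega> / PS p (A \<inter> B) \<omega>) \<le> PS p A \<omega> * pmf (F x0) (restrict \<omega> (A \<union> B))"
    using mult_left_mono[OF F0 nn] .
  ultimately show ?thesis by (metis order_trans)
qed

lemma PS_restrict_int: "PS p (A \<inter> B) (restrict \<omega> (A \<union> B)) = PS p (A \<inter> B) \<omega>"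
  by (rule PS_restrict) auto

definition rr :: "jdist \<Rightarrow> nat set \<Rightarrow> nat set \<Rightarrow> (nat \<Rightarrow> nat) \<Rightarrow> real" where
  "rr p A B \<omega> = PS p A \<omega> * PS p B \<omega> / (PS p (A \<union> B) \<omega> * PS p (A \<inter> B) \<omega>)"

lemma rr_nonneg: "\<omega> \<in> set_pmf p \<Longrightarrow> 0 \<le> rr p A B \<omega>"
  unfolding rr_def using PS_pos[of \<omega> p] by (simp add: less_imp_le)

lemma rr_int: "(\<integral>\<^sup>+\<omega>. ennreal (rr p A B \<omega>) \<partial>measure_pmf p) \<le> 1"
proof -
  have "(\<integral>\<^sup>+\<omega>. ennreal (rr p A B \<omega>) \<partial>p) = (\<integral>\<^sup>+\<omega>. ennreal (rr p A B (restrict \<omega> (A \<union> B))) \<partial>p)"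
    unfolding rr_def by (intro nn_integral_cong) (simp add: PS_restrict PS_restrict_int)
  also have "\<dots> = (\<integral>\<^sup>+w. ennreal (rr p A B w) \<partial>marg p (A \<union> B))"
    unfolding marg_def by simp
  also have "\<dots> = (\<integral>\<^sup>+w. ennreal (pmf (marg p (A \<union> B)) w) * ennreal (rr p A B w) \<partial>count_space UNIV)"
    by (rule nn_integral_measure_pmf)
  also have "\<dots> \<le> (\<integral>\<^sup>+w. ennreal (pmf (glue p A B) w) \<partial>count_space UNIV)"
  proof (intro nn_integral_mono)
    fix w
    show "ennreal (pmf (marg p (A \<union> B)) w) * ennreal (rr p A B w) \<le> ennreal (pmf (glue p A B) w)"
    proof (cases "w \<in> set_pmf (marg p (A \<union> B))")
      case True
      then obtain \<omega> where om: "\<omega> \<in> set_pmf p" and w: "w = restrict \<omega> (A \<union> B)"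
        unfolding marg_def by auto
      have r: "rr p A B w = rr p A B \<omega>" unfolding w rr_def by (simp add: PS_restrict PS_restrict_int)
      have pm: "pmf (marg p (A \<union> B)) w = PS p (A \<union> B) \<omega>" unfolding w by (rule pmf_marg)
      have pos: "PS p (A \<union> B) \<omega> > 0" by (rule PS_pos[OF om])
      have "PS p (A \<union> B) \<omega> * rr p A B \<omega> = PS p A \<omega> * (PS p B \<omega> / PS p (A \<inter> B) \<omega>)"
        unfolding rr_def using pos by (simp add: field_simps)
      also have "\<dots> \<le> pmf (glue p A B) w" unfolding w by (rule glue_lower[OF om])
      finally have "pmf (marg p (A \<union> B)) w * rr p A B w \<le> pmf (glue p A B) w"
        using r pm by simp
      then show ?thesis using pos rr_nonneg[OF om, of A B] r pm
        by (simp add: ennreal_mult'[symmetric])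
    next
      case False
      then have "pmf (marg p (A \<union> B)) w = 0" by (simp add: set_pmf_iff)
      then show ?thesis by simp
    qed
  qed
  also have "\<dots> = 1" by (simp add: nn_integral_pmf)
  finally show ?thesis .
qed

lemma rr_pos: "\<omega> \<in> set_pmf p \<Longrightarrow> 0 < rr p A B \<omega>"
  unfolding rr_def using PS_pos[of \<omega> p] by simp

lemma pt_ident:
  assumes "\<omega> \<in> set_pmf p"
  shows "aS p (A \<union> B) \<omega> + aS p (A \<inter> B) \<omega> = aS p A \<omega> + aS p B \<omega> + log 2 (rr p A B \<omega>)"
proof -
  have p: "\<And>S. PS p S \<omega> > 0" using PS_pos[OF assms] by auto
  show ?thesis unfolding aS_def rr_def
    using p[of A] p[of B] p[of "A \<union> B"] p[of "A \<inter> B"] by (simp add: log_mult log_divide)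
qed

lemma pt_bound:
  assumes "\<omega> \<in> set_pmf p"
  shows "log 2 (rr p A B \<omega>) \<le> (rr p A B \<omega> - 1) / ln 2"
proof -
  have "ln (rr p A B \<omega>) \<le> rr p A B \<omega> - 1" using rr_pos[OF assms] by (rule ln_le_minus_one)
  then show ?thesis unfolding log_def by (simp add: divide_right_mono)
qed

lemma ent_union_fin:
  assumes "entropy_pmf (marg p A) < \<infinity>" "entropy_pmf (marg p B) < \<infinity>"
  shows "entropy_pmf (marg p (A \<union> B)) < \<infinity>"
proof -
  have "(\<integral>\<^sup>+\<omega>. ennreal (aS p (A \<union> B) \<omega>) \<partial>measure_pmf p) \<le>
     (\<integral>\<^sup>+\<omega>. ennreal (aS p A \<omega>) + ennreal (aS p B \<omega>) + ennreal (rr p A B \<omega>) * ennreal (1 / ln 2) \<partial>measure_pmf p)"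
  proof (intro nn_integral_mono_AE, unfold AE_measure_pmf_iff, intro ballI)
    fix \<omega> assume om: "\<omega> \<in> set_pmf p"
    have "aS p (A \<union> B) \<omega> \<le> aS p A \<omega> + aS p B \<omega> + rr p A B \<omega> * (1 / ln 2)"
    proof -
      have b: "log 2 (rr p A B \<omega>) \<le> rr p A B \<omega> * (1 / ln 2) - 1 / ln 2"
        using pt_bound[OF om, of A B] by (simp add: diff_divide_distrib)
      have l: "0 \<le> 1 / ln (2::real)" by simp
      show ?thesis using pt_ident[OF om, of A B] b l aS_nonneg[OF om, of "A \<inter> B"] by linarith
    qed
    then have "ennreal (aS p (A \<union> B) \<omega>) \<le> ennreal (aS p A \<omega> + aS p B \<omega> + rr p A B \<omega> * (1 / ln 2))"
      by (rule ennreal_leI)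
    also have "\<dots> = ennreal (aS p A \<omega>) + ennreal (aS p B \<omega>) + ennreal (rr p A B \<omega>) * ennreal (1 / ln 2)"
      using aS_nonneg[OF om, of A] aS_nonneg[OF om, of B] rr_nonneg[OF om, of A B]
      by (simp add: ennreal_mult[symmetric] del: times_divide_eq_right)
    finally show "ennreal (aS p (A \<union> B) \<omega>) \<le> ennreal (aS p A \<omega>) + ennreal (aS p B \<omega>) + ennreal (rr p A B \<omega>) * ennreal (1 / ln 2)" .
  qed
  also have "\<dots> = (\<integral>\<^sup>+\<omega>. ennreal (aS p A \<omega>) \<partial>measure_pmf p) + (\<integral>\<^sup>+\<omega>. ennreal (aS p B \<omega>) \<partial>measure_pmf p)
      + (\<integral>\<^sup>+\<omega>. ennreal (rr p A B \<omega>) \<partial>measure_pmf p) * ennreal (1 / ln 2)"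
    by (simp add: nn_integral_add nn_integral_multc)
  also have "\<dots> < \<infinity>"
  proof -
    have c: "(\<integral>\<^sup>+\<omega>. ennreal (rr p A B \<omega>) \<partial>measure_pmf p) < \<infinity>"
      using rr_int[of p A B] by (rule le_less_trans) simp
    show ?thesis using assms c unfolding entropy_marg
      by (simp add: ennreal_mult_less_top)
  qed
  finally show ?thesis unfolding entropy_marg .
qed

lemma ent_mono: "A \<subseteq> B \<Longrightarrow> entropy_pmf (marg p A) \<le> entropy_pmf (marg p B)"
  unfolding entropy_marg
  by (intro nn_integral_mono_AE) (auto simp: AE_measure_pmf_iff intro!: ennreal_leI aS_mono)

lemma ent_empty: "entropy_pmf (marg p {}) = 0"
proof -
  have "\<And>\<omega>::nat\<Rightarrow>nat. restrict \<omega> {} = (\<lambda>_. undefined)" by (simp add: restrict_def)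
  then show ?thesis unfolding entropy_marg aS_def PS_def by simp
qed

lemma ent_fin:
  assumes "admissible n p" "S \<subseteq> {1..n}"
  shows "entropy_pmf (marg p S) < \<infinity>"
proof -
  have "finite S" using assms(2) finite_subset by blast
  then show ?thesis using assms(2)
  proof (induction S rule: finite_induct)
    case empty then show ?case by (simp add: ent_empty)
  next
    case (insert i S)
    have "entropy_pmf (marg p {i}) < \<infinity>" using assms(1) insert.prems
      unfolding admissible_def by auto
    moreover have "entropy_pmf (marg p S) < \<infinity>" using insert by auto
    ultimately show ?case using ent_union_fin[of p "{i}" S] by simp
  qed
qed

lemma integrable_aS:
  assumes "entropy_pmf (marg p S) < \<infinity>"
  shows "integrable (measure_pmf p) (aS p S)"
  by (rule integrableI_nonneg) (use assms in \<open>auto simp: AE_measure_pmf_iff aS_nonneg entropy_marg\<close>)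

lemma H_mono:
  assumes "A \<subseteq> B" "entropy_pmf (marg p B) < \<infinity>"
  shows "H p A \<le> H p B"
  unfolding H_def using assms ent_mono[OF assms(1), of p]
  by (intro enn2real_mono) auto

lemma H_submod:
  assumes fa: "entropy_pmf (marg p A) < \<infinity>" and fb: "entropy_pmf (marg p B) < \<infinity>"
  shows "H p (A \<union> B) + H p (A \<inter> B) \<le> H p A + H p B"
proof -
  have fab: "entropy_pmf (marg p (A \<union> B)) < \<infinity>" by (rule ent_union_fin[OF fa fb])
  have fz: "entropy_pmf (marg p (A \<inter> B)) < \<infinity>"
    using ent_mono[of "A \<inter> B" A p] fa by (simp add: le_less_trans)
  note i1 = integrable_aS[OF fa] and i2 = integrable_aS[OF fb]
    and i3 = integrable_aS[OF fab] and i4 = integrable_aS[OF fz]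
  have ir: "integrable (measure_pmf p) (rr p A B)"
    by (rule integrableI_nonneg)
      (auto simp: AE_measure_pmf_iff rr_nonneg intro: le_less_trans[OF rr_int])
  have rle: "(\<integral>\<omega>. rr p A B \<omega> \<partial>measure_pmf p) \<le> 1"
  proof -
    have "(\<integral>\<omega>. rr p A B \<omega> \<partial>measure_pmf p) = enn2real (\<integral>\<^sup>+\<omega>. ennreal (rr p A B \<omega>) \<partial>measure_pmf p)"
      by (rule integral_eq_nn_integral) (auto simp: AE_measure_pmf_iff rr_nonneg)
    also have "\<dots> \<le> enn2real 1" by (intro enn2real_mono rr_int) simp
    finally show ?thesis by simp
  qed
  have "(\<integral>\<omega>. aS p (A \<union> B) \<omega> + aS p (A \<inter> B) \<omega> \<partial>measure_pmf p) \<le>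
        (\<integral>\<omega>. aS p A \<omega> + aS p B \<omega> + (rr p A B \<omega> * (1 / ln 2) - 1 / ln 2) \<partial>measure_pmf p)"
  proof (rule integral_mono_AE)
    show "integrable (measure_pmf p) (\<lambda>\<omega>. aS p (A \<union> B) \<omega> + aS p (A \<inter> B) \<omega>)" using i3 i4 by simp
    show "integrable (measure_pmf p) (\<lambda>\<omega>. aS p A \<omega> + aS p B \<omega> + (rr p A B \<omega> * (1 / ln 2) - 1 / ln 2))"
      using i1 i2 ir by simp
    show "AE \<omega> in measure_pmf p. aS p (A \<union> B) \<omega> + aS p (A \<inter> B) \<omega> \<le> aS p A \<omega> + aS p B \<omega> + (rr p A B \<omega> * (1 / ln 2) - 1 / ln 2)"
      unfolding AE_measure_pmf_iff
    proof
      fix \<omega> assume om: "\<omega> \<in> set_pmf p"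
      have b: "log 2 (rr p A B \<omega>) \<le> rr p A B \<omega> * (1 / ln 2) - 1 / ln 2"
        using pt_bound[OF om, of A B] by (simp add: diff_divide_distrib)
      show "aS p (A \<union> B) \<omega> + aS p (A \<inter> B) \<omega> \<le> aS p A \<omega> + aS p B \<omega> + (rr p A B \<omega> * (1 / ln 2) - 1 / ln 2)"
        using pt_ident[OF om, of A B] b by linarith
    qed
  qed
  also have "\<dots> = H p A + H p B + ((\<integral>\<omega>. rr p A B \<omega> \<partial>measure_pmf p) * (1 / ln 2) - 1 / ln 2)"
    using i1 i2 ir by (simp add: H_integral)
  also have "\<dots> \<le> H p A + H p B"
  proof -
    have "(\<integral>\<omega>. rr p A B \<omega> \<partial>measure_pmf p) * (1 / ln 2) \<le> 1 * (1 / ln 2)"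
      using rle by (intro mult_right_mono) auto
    then show ?thesis by simp
  qed
  finally show ?thesis using i3 i4 by (simp add: H_integral)
qed



definition pm :: "nat set \<Rightarrow> (nat set \<Rightarrow> real) \<Rightarrow> bool" where
  "pm V f \<longleftrightarrow> (\<forall>A B. A \<subseteq> B \<longrightarrow> B \<subseteq> V \<longrightarrow> f A \<le> f B) \<and>
     (\<forall>A B. A \<subseteq> V \<longrightarrow> B \<subseteq> V \<longrightarrow> f (A \<union> B) + f (A \<inter> B) \<le> f A + f B)"

lemma pmD1: "pm V f \<Longrightarrow> A \<subseteq> B \<Longrightarrow> B \<subseteq> V \<Longrightarrow> f A \<le> f B"
  unfolding pm_def by blast

lemma pmD2: "pm V f \<Longrightarrow> A \<subseteq> V \<Longrightarrow> B \<subseteq> V \<Longrightarrow> f (A \<union> B) + f (A \<inter> B) \<le> f A + f B"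
  unfolding pm_def by blast

lemma pm_H:
  assumes "admissible n p" shows "pm {1..n} (H p)"
  unfolding pm_def
proof (intro conjI allI impI)
  fix A B :: "nat set" assume "A \<subseteq> B" "B \<subseteq> {1..n}"
  then show "H p A \<le> H p B" using H_mono[of A B p] ent_fin[OF assms] by blast
next
  fix A B :: "nat set" assume "A \<subseteq> {1..n}" "B \<subseteq> {1..n}"
  then show "H p (A \<union> B) + H p (A \<inter> B) \<le> H p A + H p B"
    using H_submod[OF ent_fin[OF assms] ent_fin[OF assms]] by blast
qed

lemma pm_shift:
  assumes "pm V f" "C \<subseteq> V"
  shows "pm V (\<lambda>A. f (A \<union> C))"
  unfolding pm_def
proof (intro conjI allI impI)
  fix A B assume "A \<subseteq> B" "B \<subseteq> V"
  then show "f (A \<union> C) \<le> f (B \<union> C)" using assms by (intro pmD1[OF assms(1)]) auto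
next
  fix A B assume "A \<subseteq> V" "B \<subseteq> V"
  then have "f ((A \<union> C) \<union> (B \<union> C)) + f ((A \<union> C) \<inter> (B \<union> C)) \<le> f (A \<union> C) + f (B \<union> C)"
    using assms by (intro pmD2[OF assms(1)]) auto
  moreover have "(A \<union> C) \<union> (B \<union> C) = A \<union> B \<union> C" "(A \<union> C) \<inter> (B \<union> C) = A \<inter> B \<union> C" by auto
  ultimately show "f (A \<union> B \<union> C) + f (A \<inter> B \<union> C) \<le> f (A \<union> C) + f (B \<union> C)" by simp
qed

definition MI :: "(nat set \<Rightarrow> real) \<Rightarrow> nat set multiset \<Rightarrow> real" where
  "MI f M = (\<Sum>Q\<in>#M. f Q - f {}) - (f (\<Union>(set_mset M)) - f {})"

lemma valid_MI: "valid p (C, M) \<longleftrightarrow> MI (\<lambda>A. H p (A \<union> C)) M = 0"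
  unfolding valid_def condH_def MI_def by simp

lemma MI_empty[simp]: "MI f {#} = 0"
  unfolding MI_def by simp

lemma MI_single[simp]: "MI f {#A#} = 0"
  unfolding MI_def by simp

lemma MI_add: "MI f (add_mset A M) = MI f M + (f A - f {}) + f (\<Union>(set_mset M)) - f (A \<union> \<Union>(set_mset M))"
  unfolding MI_def by simp

lemma MI_add_mono:
  assumes "pm V f" "A \<subseteq> V" "\<forall>Q\<in>#M. Q \<subseteq> V"
  shows "MI f M \<le> MI f (add_mset A M)"
proof -
  let ?U = "\<Union>(set_mset M)"
  have U: "?U \<subseteq> V" using assms by auto
  have "f (A \<union> ?U) + f (A \<inter> ?U) \<le> f A + f ?U" using pmD2[OF assms(1) assms(2) U] .
  moreover have "f {} \<le> f (A \<inter> ?U)" using pmD1[OF assms(1), of "{}" "A \<inter> ?U"] assms by auto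
  ultimately show ?thesis unfolding MI_add by linarith
qed

lemma MI_plus_mono:
  assumes "pm V f" "\<forall>Q\<in>#M. Q \<subseteq> V" "\<forall>Q\<in>#N. Q \<subseteq> V"
  shows "MI f M \<le> MI f (M + N)"
  using assms(3)
proof (induction N)
  case empty then show ?case by simp
next
  case (add A N)
  then have "MI f (M + N) \<le> MI f (add_mset A (M + N))"
    using assms by (intro MI_add_mono[OF assms(1)]) auto
  then show ?case using add by simp
qed

lemma MI_nonneg:
  assumes "pm V f" "\<forall>Q\<in>#M. Q \<subseteq> V"
  shows "0 \<le> MI f M"
  using MI_plus_mono[OF assms(1), of "{#}" M] assms by simp

lemma MI_shrink1:
  assumes "pm V f" "A' \<subseteq> A" "A \<subseteq> V" "\<forall>Q\<in>#M. Q \<subseteq> V"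
  shows "MI f (add_mset A' M) \<le> MI f (add_mset A M)"
proof -
  define U where "U = \<Union>(set_mset M)"
  have U: "U \<subseteq> V" using assms unfolding U_def by auto
  have A'U: "A' \<union> U \<subseteq> V" using U assms by blast
  have s: "f (A \<union> (A' \<union> U)) + f (A \<inter> (A' \<union> U)) \<le> f A + f (A' \<union> U)"
    using pmD2[OF assms(1) assms(3) A'U] .
  have e: "A \<union> (A' \<union> U) = A \<union> U" using assms(2) by blast
  have m: "f A' \<le> f (A \<inter> (A' \<union> U))"
    using pmD1[OF assms(1), of A' "A \<inter> (A' \<union> U)"] assms by blast
  have "MI f (add_mset A' M) = MI f M + (f A' - f {}) + f U - f (A' \<union> U)"
    unfolding U_def by (rule MI_add)
  moreover have "MI f (add_mset A M) = MI f M + (f A - f {}) + f U - f (A \<union> U)"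
    unfolding U_def by (rule MI_add)
  ultimately show ?thesis using s m unfolding e by linarith
qed

lemma MI_shrink:
  assumes "pm V f" "\<forall>Q\<in>#M. Q \<subseteq> V" "\<forall>Q\<in>#N. Q \<subseteq> V" "\<forall>Q\<in>#M. g Q \<subseteq> Q"
  shows "MI f (image_mset g M + N) \<le> MI f (M + N)"
  using assms(2-4)
proof (induction M arbitrary: N)
  case empty then show ?case by simp
next
  case (add A M)
  have gA: "g A \<subseteq> A" "A \<subseteq> V" using add.prems by auto
  have sub: "\<forall>Q\<in>#image_mset g M + N. Q \<subseteq> V" using add.prems by force
  have "MI f (image_mset g (add_mset A M) + N) = MI f (add_mset (g A) (image_mset g M + N))" by simp
  also have "\<dots> \<le> MI f (add_mset A (image_mset g M + N))"
    by (rule MI_shrink1[OF assms(1) gA sub])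
  also have "\<dots> = MI f (image_mset g M + add_mset A N)" by simp
  also have "\<dots> \<le> MI f (M + add_mset A N)"
    using add.prems by (intro add.IH) auto
  also have "\<dots> = MI f (add_mset A M + N)" by simp
  finally show ?case .
qed

lemma MI_filter: "MI f (filter_mset (\<lambda>Q. Q \<noteq> {}) M) = MI f M"
proof (induction M)
  case empty then show ?case by simp
next
  case (add A M)
  then show ?case
  proof (cases "A = {}")
    case True
    then show ?thesis using add by (simp add: MI_add)
  next
    case False
    then have "filter_mset (\<lambda>Q. Q \<noteq> {}) (add_mset A M) = add_mset A (filter_mset (\<lambda>Q. Q \<noteq> {}) M)" by simp
    moreover have "\<Union>(set_mset (filter_mset (\<lambda>Q. Q \<noteq> {}) M)) = \<Union>(set_mset M)" by auto
    ultimately show ?thesis using add by (simp add: MI_add)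
  qed
qed

lemma f_absorb:
  assumes "pm V f" "I \<subseteq> V" "f I = f {}" "A \<subseteq> V"
  shows "f (A \<union> I) = f A"
proof -
  have "f (A \<union> I) + f (A \<inter> I) \<le> f A + f I" using pmD2[OF assms(1) assms(4) assms(2)] .
  moreover have "f {} \<le> f (A \<inter> I)" using pmD1[OF assms(1), of "{}" "A \<inter> I"] assms by auto
  moreover have "f A \<le> f (A \<union> I)" using pmD1[OF assms(1), of A "A \<union> I"] assms by auto
  ultimately show ?thesis using assms(3) by linarith
qed

lemma f_minus:
  assumes "pm V f" "I \<subseteq> V" "f I = f {}" "A \<subseteq> V"
  shows "f (A - I) = f A"
proof -
  have "f (A - I) \<le> f A" using pmD1[OF assms(1), of "A - I" A] assms by auto
  moreover have "f A \<le> f ((A - I) \<union> I)" using pmD1[OF assms(1), of A "(A - I) \<union> I"] assms by auto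
  moreover have "f ((A - I) \<union> I) = f (A - I)" using f_absorb[OF assms(1-3), of "A - I"] assms by auto
  ultimately show ?thesis by linarith
qed

lemma MI_minus:
  assumes "pm V f" "I \<subseteq> V" "f I = f {}" "\<forall>Q\<in>#M. Q \<subseteq> V"
  shows "MI f (image_mset (\<lambda>Q. Q - I) M) = MI f M"
proof -
  have "image_mset (\<lambda>Q. f (Q - I) - f {}) M = image_mset (\<lambda>Q. f Q - f {}) M"
    using assms by (intro image_mset_cong) (simp add: f_minus)
  moreover have "\<Union>(set_mset (image_mset (\<lambda>Q. Q - I) M)) = \<Union>(set_mset M) - I" by auto
  moreover have "f (\<Union>(set_mset M) - I) = f (\<Union>(set_mset M))"
    using assms by (intro f_minus) auto
  ultimately show ?thesis unfolding MI_def by (simp add: image_mset.compositionality comp_def)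
qed


lemma II_split:
  assumes "x \<in> II M"
  shows "\<exists>A B N. M = add_mset A (add_mset B N) \<and> x \<in> A \<and> x \<in> B"
proof -
  define F where "F = filter_mset (\<lambda>Q. x \<in> Q) M"
  have sz: "size F \<ge> 2" using assms unfolding II_def F_def by simp
  then have "F \<noteq> {#}" by auto
  then obtain A F1 where F1: "F = add_mset A F1" by (metis multi_nonempty_split)
  then have "F1 \<noteq> {#}" using sz by auto
  then obtain B F2 where F2: "F1 = add_mset B F2" by (metis multi_nonempty_split)
  have "x \<in> A" "x \<in> B" using F1 F2 unfolding F_def
    by (metis multiset_partition union_iff mem_Collect_eq set_mset_filter union_single_eq_member
        add_mset_add_single)+
  moreover have "M = F + filter_mset (\<lambda>Q. x \<notin> Q) M" unfolding F_def by (rule multiset_partition)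
  ultimately show ?thesis using F1 F2 by auto
qed

lemma II_sub: "II M \<subseteq> \<Union>(set_mset M)"
proof
  fix x assume "x \<in> II M"
  then obtain A B N where "M = add_mset A (add_mset B N)" "x \<in> A" using II_split by blast
  then show "x \<in> \<Union>(set_mset M)" by auto
qed

lemma MI_pair: "MI f {#A, A#} = f A - f {}"
  unfolding MI_def by simp

lemma MI_II:
  assumes "pm V f" "\<forall>Q\<in>#M. Q \<subseteq> V" "x \<in> II M"
  shows "f {x} - f {} \<le> MI f M"
proof -
  obtain A B N where M: "M = add_mset A (add_mset B N)" and x: "x \<in> A" "x \<in> B"
    using II_split[OF assms(3)] by blast
  have AB: "\<forall>Q\<in>#{#A, B#}. Q \<subseteq> V" using assms(2) M by auto
  have "f {x} - f {} = MI f (image_mset (\<lambda>_. {x}) {#A, B#} + {#})" by (simp add: MI_pair)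
  also have "\<dots> \<le> MI f ({#A, B#} + {#})"
    using x by (intro MI_shrink[OF assms(1) AB]) auto
  also have "\<dots> = MI f {#A, B#}" by simp
  also have "\<dots> \<le> MI f ({#A, B#} + N)"
    using assms(2) M by (intro MI_plus_mono[OF assms(1)]) auto
  also have "{#A, B#} + N = M" using M by simp
  finally show ?thesis .
qed

lemma f_II:
  assumes "pm V f" "finite V" "\<forall>Q\<in>#M. Q \<subseteq> V" "MI f M = 0"
  shows "f (II M) = f {}"
proof -
  have IV: "II M \<subseteq> V" using II_sub[of M] assms(3) by auto
  have each: "\<And>x. x \<in> II M \<Longrightarrow> f {x} \<le> f {}" using MI_II[OF assms(1) assms(3)] assms(4) by fastforce
  have "\<And>S. finite S \<Longrightarrow> S \<subseteq> II M \<Longrightarrow> f S \<le> f {}"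
  proof -
    fix S :: "nat set" assume "finite S" "S \<subseteq> II M"
    then show "f S \<le> f {}"
    proof (induction S rule: finite_induct)
      case empty then show ?case by simp
    next
      case (insert x S)
      have xV: "{x} \<subseteq> V" "S \<subseteq> V" using insert.prems IV by auto
      have "f ({x} \<union> S) + f ({x} \<inter> S) \<le> f {x} + f S" using pmD2[OF assms(1) xV] .
      moreover have "f {} \<le> f ({x} \<inter> S)" using pmD1[OF assms(1), of "{}" "{x} \<inter> S"] xV by auto
      moreover have "f {x} \<le> f {}" using each insert.prems by auto
      moreover have "f S \<le> f {}" using insert by auto
      ultimately show ?case by simp
    qed
  qed
  then have "f (II M) \<le> f {}" using IV assms(2) finite_subset by blast
  moreover have "f {} \<le> f (II M)" using pmD1[OF assms(1), of "{}" "II M"] IV by auto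
  ultimately show ?thesis by simp
qed

lemma size_le1: "size M \<le> 1 \<Longrightarrow> M = {#} \<or> (\<exists>A. M = {#A#})"
  by (cases M) auto

lemma MI_size_le1: "size M \<le> 1 \<Longrightarrow> MI f M = 0"
  using size_le1 by fastforce

definition canok :: "(nat set \<Rightarrow> real) \<Rightarrow> cmi option \<Rightarrow> bool" where
  "canok f G = (case G of None \<Rightarrow> True | Some K \<Rightarrow> MI f (snd K) = 0)"

lemma MI_can:
  assumes pm: "pm V f" and fin: "finite V" and MV: "\<forall>Q\<in>#M. Q \<subseteq> V"
  shows "(MI f M = 0) \<longleftrightarrow> canok f (can (C, M))"
proof (cases "size M \<le> 1")
  case True
  then show ?thesis unfolding can_def canok_def by (simp add: MI_size_le1)
next
  case big: False
  define I where "I = II M"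
  define Ps where "Ps = filter_mset (\<lambda>P. P \<noteq> {}) (image_mset (\<lambda>Q. Q - I) M)"
  have cn: "can (C, M) = (if I \<noteq> {} \<and> size Ps \<le> 1 then Some (C, {#I, I#})
     else if I = {} then Some (C, Ps) else Some (C, {#I, I#} + Ps))"
    unfolding can_def Let_def I_def Ps_def using big by simp
  have PsV: "\<forall>Q\<in>#Ps. Q \<subseteq> V" unfolding Ps_def using MV by auto
  have IV: "I \<subseteq> V" unfolding I_def using II_sub[of M] MV by auto
  have imV: "\<forall>Q\<in>#image_mset (\<lambda>Q. Q - I) M. Q \<subseteq> V" using MV by auto
  have le: "MI f Ps \<le> MI f M"
  proof -
    have "MI f Ps = MI f (image_mset (\<lambda>Q. Q - I) M + {#})" unfolding Ps_def by (simp add: MI_filter)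
    also have "\<dots> \<le> MI f (M + {#})" by (intro MI_shrink[OF pm MV]) auto
    finally show ?thesis by simp
  qed
  have nn: "0 \<le> MI f Ps" by (rule MI_nonneg[OF pm PsV])
  have k1: "f I = f {} \<Longrightarrow> MI f Ps = MI f M"
    unfolding Ps_def MI_filter using MI_minus[OF pm IV _ MV] by simp
  have k2: "MI f M = 0 \<Longrightarrow> f I = f {}" unfolding I_def by (rule f_II[OF pm fin MV])
  have fI: "f {} \<le> f I" using pmD1[OF pm, of "{}" I] IV by auto
  show ?thesis
  proof (cases "I \<noteq> {} \<and> size Ps \<le> 1")
    case True
    then have "MI f Ps = 0" by (simp add: MI_size_le1)
    then show ?thesis using True cn k1 k2 unfolding canok_def by (auto simp: MI_pair)
  next
    case c2: False
    show ?thesis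
    proof (cases "I = {}")
      case True
      then show ?thesis using cn k1 unfolding canok_def by auto
    next
      case False
      define U where "U = \<Union>(set_mset Ps)"
      have UV: "U \<subseteq> V" using PsV unfolding U_def by auto
      have e1: "MI f ({#I, I#} + Ps) = MI f (add_mset I Ps) + (f I - f {})"
        using MI_add[of f I "add_mset I Ps"] by (simp add: Un_assoc[symmetric])
      have e2: "MI f (add_mset I Ps) = MI f Ps + (f I - f {}) + f U - f (I \<union> U)"
        unfolding U_def by (rule MI_add)
      have m: "MI f Ps \<le> MI f (add_mset I Ps)" by (rule MI_add_mono[OF pm IV PsV])
      have "(MI f ({#I, I#} + Ps) = 0) \<longleftrightarrow> (f I = f {} \<and> MI f Ps = 0)"
      proof
        assume "MI f ({#I, I#} + Ps) = 0"
        then show "f I = f {} \<and> MI f Ps = 0" using e1 m nn fI by linarith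
      next
        assume a: "f I = f {} \<and> MI f Ps = 0"
        then have "f (U \<union> I) = f U" using f_absorb[OF pm IV _ UV] by simp
        then have "f (I \<union> U) = f U" by (simp add: Un_commute)
        then show "MI f ({#I, I#} + Ps) = 0" using e1 e2 a by linarith
      qed
      moreover have "(MI f M = 0) \<longleftrightarrow> (f I = f {} \<and> MI f Ps = 0)"
        using k1 k2 le nn by (metis order_antisym_conv)
      ultimately show ?thesis using cn c2 False unfolding canok_def by auto
    qed
  qed
qed



definition cnt :: "nat set multiset \<Rightarrow> nat set \<Rightarrow> nat" where
  "cnt M D = size (filter_mset (\<lambda>Q. Q \<inter> D \<noteq> {}) M)"

definition shp :: "nat set \<Rightarrow> nat set set \<Rightarrow> nat set multiset \<Rightarrow> bool" where
  "shp I PP M \<longleftrightarrow> finite PP \<and> (\<forall>P\<in>PP. P \<noteq> {} \<and> P \<inter> I = {}) \<and>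
     (\<forall>P\<in>PP. \<forall>P'\<in>PP. P \<noteq> P' \<longrightarrow> P \<inter> P' = {}) \<and>
     ((I = {} \<and> card PP \<ge> 2 \<and> M = mset_set PP) \<or> (I \<noteq> {} \<and> card PP \<noteq> 1 \<and> M = {#I, I#} + mset_set PP))"

lemma cnt_shp:
  assumes "shp I PP M"
  shows "cnt M D = (if I \<inter> D \<noteq> {} then 2 else 0) + card {P\<in>PP. P \<inter> D \<noteq> {}}"
proof -
  have fin: "finite PP" using assms unfolding shp_def by blast
  have base: "cnt (mset_set PP) D = card {P\<in>PP. P \<inter> D \<noteq> {}}"
    using fin unfolding cnt_def by simp
  have add: "cnt ({#I, I#} + N) D = (if I \<inter> D \<noteq> {} then 2 else 0) + cnt N D" for N
    unfolding cnt_def by (cases "I \<inter> D \<noteq> {}") simp_all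
  have "(I = {} \<and> M = mset_set PP) \<or> (M = {#I, I#} + mset_set PP)"
    using assms unfolding shp_def by blast
  then show ?thesis
  proof
    assume "I = {} \<and> M = mset_set PP" then show ?thesis using base by simp
  next
    assume "M = {#I, I#} + mset_set PP" then show ?thesis using base add by simp
  qed
qed

lemma card_pp_ge2:
  assumes "shp I PP M" "P \<in> PP"
  shows "\<exists>P2\<in>PP. P2 \<noteq> P"
proof -
  have fin: "finite PP" using assms unfolding shp_def by auto
  have "card PP \<ge> 2"
  proof -
    have "card PP > 0" using fin assms(2) by (auto simp: card_gt_0_iff)
    then have "card PP \<ge> 1" by simp
    moreover have "card PP \<noteq> 1 \<or> card PP \<ge> 2" using assms(1) unfolding shp_def by auto
    ultimately show ?thesis by linarith
  qed
  show ?thesis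
  proof (rule ccontr)
    assume "\<not> (\<exists>P2\<in>PP. P2 \<noteq> P)"
    then have "PP \<subseteq> {P}" by auto
    then have "card PP \<le> card {P}" by (intro card_mono) auto
    then show False using \<open>card PP \<ge> 2\<close> by simp
  qed
qed

lemma card_meet_le1:
  assumes "shp I PP M" "\<And>P'. P' \<in> PP \<Longrightarrow> P' \<inter> D \<noteq> {} \<Longrightarrow> P' = P0"
  shows "card {P\<in>PP. P \<inter> D \<noteq> {}} \<le> 1"
proof -
  have fin: "finite PP" using assms unfolding shp_def by auto
  have "{P\<in>PP. P \<inter> D \<noteq> {}} \<subseteq> {P0}" using assms(2) by auto
  then have "card {P\<in>PP. P \<inter> D \<noteq> {}} \<le> card {P0}" by (intro card_mono) auto
  then show ?thesis by simp
qed

lemma shp_fin: "shp I PP M \<Longrightarrow> finite PP"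
  unfolding shp_def by (elim conjE)
lemma shp_ne: "shp I PP M \<Longrightarrow> P \<in> PP \<Longrightarrow> P \<noteq> {}"
  unfolding shp_def by (elim conjE) simp
lemma shp_dI: "shp I PP M \<Longrightarrow> P \<in> PP \<Longrightarrow> P \<inter> I = {}"
  unfolding shp_def by (elim conjE) simp
lemma shp_disj: "shp I PP M \<Longrightarrow> P \<in> PP \<Longrightarrow> P' \<in> PP \<Longrightarrow> P \<noteq> P' \<Longrightarrow> P \<inter> P' = {}"
  unfolding shp_def by (elim conjE) simp

lemma shp_M: "shp I PP M \<Longrightarrow> M = (if I = {} then mset_set PP else {#I, I#} + mset_set PP)"
  unfolding shp_def by (elim conjE disjE) simp_all

lemma fact_a:
  assumes "shp I PP M" "x \<notin> I"
  shows "cnt M {x} \<le> 1"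
proof -
  have "card {P\<in>PP. P \<inter> {x} \<noteq> {}} \<le> 1"
  proof (cases "\<exists>P0\<in>PP. x \<in> P0")
    case True
    then obtain P0 where P0: "P0 \<in> PP" "x \<in> P0" by blast
    show ?thesis
    proof (rule card_meet_le1[OF assms(1), of _ P0])
      fix P' assume "P' \<in> PP" "P' \<inter> {x} \<noteq> {}"
      then show "P' = P0" using shp_disj[OF assms(1) \<open>P' \<in> PP\<close> P0(1)] P0(2) by blast
    qed
  next
    case False
    then have "{P\<in>PP. P \<inter> {x} \<noteq> {}} = {}" by auto
    then show ?thesis by (metis card.empty zero_le_one)
  qed
  then show ?thesis using cnt_shp[OF assms(1), of "{x}"] assms(2) by simp
qed

lemma fact_I:
  assumes "shp I PP M" "x \<in> I"
  shows "\<not> cnt M {x} \<le> 1"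
  using cnt_shp[OF assms(1), of "{x}"] assms(2) by auto

lemma fact_b:
  assumes "shp I PP M" "P1 \<in> PP" "P2 \<in> PP" "P1 \<noteq> P2" "x \<in> P1" "y \<in> P2"
  shows "\<not> cnt M {x, y} \<le> 1"
proof -
  have fin: "finite PP" using shp_fin[OF assms(1)] .
  have "{P1, P2} \<subseteq> {P\<in>PP. P \<inter> {x, y} \<noteq> {}}" using assms(2,3,5,6) by auto
  then have "card {P1, P2} \<le> card {P\<in>PP. P \<inter> {x, y} \<noteq> {}}" using fin by (intro card_mono) auto
  then have "2 \<le> card {P\<in>PP. P \<inter> {x, y} \<noteq> {}}" using assms(4) by simp
  then show ?thesis using cnt_shp[OF assms(1), of "{x, y}"] by simp
qed

lemma fact_c:
  assumes "shp I PP M" "x \<notin> I" "y \<notin> I" "x \<notin> \<Union>PP"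
  shows "cnt M {x, y} \<le> 1"
proof -
  have "card {P\<in>PP. P \<inter> {x, y} \<noteq> {}} \<le> 1"
  proof (cases "\<exists>P0\<in>PP. y \<in> P0")
    case True
    then obtain P0 where P0: "P0 \<in> PP" "y \<in> P0" by blast
    show ?thesis
    proof (rule card_meet_le1[OF assms(1), of _ P0])
      fix P' assume P': "P' \<in> PP" "P' \<inter> {x, y} \<noteq> {}"
      then have "y \<in> P'" using assms(4) by blast
      then show "P' = P0" using shp_disj[OF assms(1) P'(1) P0(1)] P0(2) by blast
    qed
  next
    case False
    then have "{P\<in>PP. P \<inter> {x, y} \<noteq> {}} = {}" using assms(4) by auto
    then show ?thesis by (metis card.empty zero_le_one)
  qed
  moreover have "I \<inter> {x, y} = {}" using assms(2,3) by blast
  ultimately show ?thesis using cnt_shp[OF assms(1), of "{x, y}"] by simp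
qed

lemma fact_d:
  assumes "shp I PP M" "P0 \<in> PP" "x \<in> P0" "z \<in> P0"
  shows "cnt M {x, z} \<le> 1"
proof -
  have dj: "P0 \<inter> I = {}" using shp_dI[OF assms(1,2)] .
  have "card {P\<in>PP. P \<inter> {x, z} \<noteq> {}} \<le> 1"
  proof (rule card_meet_le1[OF assms(1), of _ P0])
    fix P' assume P': "P' \<in> PP" "P' \<inter> {x, z} \<noteq> {}"
    then have "x \<in> P' \<or> z \<in> P'" by blast
    then show "P' = P0" using shp_disj[OF assms(1) P'(1) assms(2)] assms(3,4) by blast
  qed
  moreover have "I \<inter> {x, z} = {}" using dj assms(3,4) by blast
  ultimately show ?thesis using cnt_shp[OF assms(1), of "{x, z}"] by simp
qed

lemma shp_I_eq:
  assumes "shp I PP M" "shp I' PP' M'" "I \<subseteq> W" "I' \<subseteq> W"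
    and T: "\<And>D. D \<subseteq> W \<Longrightarrow> (cnt M D \<le> 1) = (cnt M' D \<le> 1)"
  shows "I = I'"
proof -
  have "\<And>x. x \<in> W \<Longrightarrow> (x \<in> I) = (x \<in> I')"
  proof -
    fix x assume "x \<in> W"
    then have "(cnt M {x} \<le> 1) = (cnt M' {x} \<le> 1)" by (intro T) auto
    moreover have "(x \<in> I) = (\<not> cnt M {x} \<le> 1)" using fact_a[OF assms(1)] fact_I[OF assms(1)] by blast
    moreover have "(x \<in> I') = (\<not> cnt M' {x} \<le> 1)" using fact_a[OF assms(2)] fact_I[OF assms(2)] by blast
    ultimately show "(x \<in> I) = (x \<in> I')" by simp
  qed
  then show ?thesis using assms(3,4) by blast
qed

lemma shp_U:
  assumes "shp I PP M" "shp I PP' M'" "\<Union>PP \<subseteq> W"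
    and T: "\<And>D. D \<subseteq> W \<Longrightarrow> (cnt M D \<le> 1) = (cnt M' D \<le> 1)"
  shows "\<Union>PP \<subseteq> \<Union>PP'"
proof
  fix x assume "x \<in> \<Union>PP"
  then obtain P where P: "P \<in> PP" "x \<in> P" by blast
  obtain P2 where P2: "P2 \<in> PP" "P2 \<noteq> P" using card_pp_ge2[OF assms(1) P(1)] by blast
  then obtain y where y: "y \<in> P2" using shp_ne[OF assms(1) P2(1)] by blast
  have nI: "x \<notin> I" "y \<notin> I" using shp_dI[OF assms(1) P(1)] shp_dI[OF assms(1) P2(1)] P(2) y by blast+
  have "\<not> cnt M {x, y} \<le> 1" using fact_b[OF assms(1) P(1) P2(1)] P2(2) P(2) y by metis
  moreover have "{x, y} \<subseteq> W" using assms(3) P P2 y by blast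
  ultimately have "\<not> cnt M' {x, y} \<le> 1" using T by blast
  then show "x \<in> \<Union>PP'" using fact_c[OF assms(2) nI] by blast
qed

lemma shp_P:
  assumes "shp I PP M" "shp I PP' M'" "\<Union>PP \<subseteq> W" "\<Union>PP' \<subseteq> W"
    and T: "\<And>D. D \<subseteq> W \<Longrightarrow> (cnt M D \<le> 1) = (cnt M' D \<le> 1)"
  shows "PP \<subseteq> PP'"
proof
  have T': "\<And>D. D \<subseteq> W \<Longrightarrow> (cnt M' D \<le> 1) = (cnt M D \<le> 1)" using T by metis
  have U1: "\<Union>PP \<subseteq> \<Union>PP'" by (rule shp_U[OF assms(1,2,3) T])
  have U2: "\<Union>PP' \<subseteq> \<Union>PP" by (rule shp_U[OF assms(2,1,4) T'])
  fix P assume P: "P \<in> PP"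
  then obtain x where x: "x \<in> P" using shp_ne[OF assms(1)] by blast
  then obtain P' where P': "P' \<in> PP'" "x \<in> P'" using U1 P by blast
  have "P = P'"
  proof
    show "P \<subseteq> P'"
    proof
      fix z assume z: "z \<in> P"
      then obtain P'' where P'': "P'' \<in> PP'" "z \<in> P''" using U1 P by blast
      have "cnt M {x, z} \<le> 1" by (rule fact_d[OF assms(1) P x z])
      moreover have "{x, z} \<subseteq> W" using assms(3) P x z by blast
      ultimately have "cnt M' {x, z} \<le> 1" using T by blast
      then have "P'' = P'" using fact_b[OF assms(2) P'(1) P''(1) _ P'(2) P''(2)] by metis
      then show "z \<in> P'" using P'' by simp
    qed
  next
    show "P' \<subseteq> P"
    proof
      fix z assume z: "z \<in> P'"
      then obtain P'' where P'': "P'' \<in> PP" "z \<in> P''" using U2 P' by blast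
      have "cnt M' {x, z} \<le> 1" by (rule fact_d[OF assms(2) P'(1) P'(2) z])
      moreover have "{x, z} \<subseteq> W" using assms(4) P' z by blast
      ultimately have "cnt M {x, z} \<le> 1" using T by blast
      then have "P'' = P" using fact_b[OF assms(1) P P''(1) _ x P''(2)] by metis
      then show "z \<in> P" using P'' by simp
    qed
  qed
  then show "P \<in> PP'" using P' by simp
qed

lemma shp_unique:
  assumes "shp I PP M" "shp I' PP' M'" "I \<subseteq> W" "I' \<subseteq> W" "\<Union>PP \<subseteq> W" "\<Union>PP' \<subseteq> W"
    and T: "\<And>D. D \<subseteq> W \<Longrightarrow> (cnt M D \<le> 1) = (cnt M' D \<le> 1)"
  shows "M = M'"
proof -
  have T': "\<And>D. D \<subseteq> W \<Longrightarrow> (cnt M' D \<le> 1) = (cnt M D \<le> 1)" using T by metis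
  have II: "I = I'" by (rule shp_I_eq[OF assms(1-4) T])
  have "PP = PP'"
    using shp_P[OF assms(1) assms(2)[folded II] assms(5,6) T] shp_P[OF assms(2)[folded II] assms(1) assms(6,5) T']
    by blast
  then show ?thesis using shp_M[OF assms(1)] shp_M[OF assms(2)] II by simp
qed



definition pure :: "nat set \<Rightarrow> nat set multiset \<Rightarrow> bool" where
  "pure C M \<longleftrightarrow> (\<forall>Q\<in>#M. Q \<noteq> {} \<and> Q \<inter> C = {})"

definition good :: "cmi option \<Rightarrow> bool" where
  "good G \<longleftrightarrow> (case G of None \<Rightarrow> True
     | Some K \<Rightarrow> size (snd K) \<ge> 2 \<and> pure (fst K) (snd K) \<and> (\<exists>I PP. shp I PP (snd K)))"

lemma dist_mset: "(\<And>x. count M x \<le> 1) \<Longrightarrow> mset_set (set_mset M) = M"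
proof (rule multiset_eqI)
  fix x assume a: "\<And>x. count M x \<le> 1"
  show "count (mset_set (set_mset M)) x = count M x"
  proof (cases "x \<in># M")
    case True
    then have c1: "count M x \<ge> 1" by (simp add: Suc_le_eq)
    have "count M x = 1" using a[of x] c1 by linarith
    then show ?thesis using True by simp
  next
    case False then show ?thesis by (simp add: not_in_iff)
  qed
qed

lemma card_set_le_size: "card (set_mset M) \<le> size M"
  by (induction M) (auto simp: card_insert_if)

lemma can_big:
  assumes "\<not> size M \<le> 1"
  shows "can (C, M) = (let I = II M; Ps = filter_mset (\<lambda>P. P \<noteq> {}) (image_mset (\<lambda>Q. Q - I) M) in
     if I \<noteq> {} \<and> size Ps \<le> 1 then Some (C, {#I, I#})
     else if I = {} then Some (C, Ps) else Some (C, {#I, I#} + Ps))"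
  unfolding can_def Let_def using assms by simp

lemma good_can:
  assumes pu: "pure C M"
  shows "good (can (C, M))"
proof (cases "size M \<le> 1")
  case True
  then show ?thesis unfolding can_def good_def by simp
next
  case big: False
  define I where "I = II M"
  define Ps where "Ps = filter_mset (\<lambda>P. P \<noteq> {}) (image_mset (\<lambda>Q. Q - I) M)"
  have cn: "can (C, M) = (if I \<noteq> {} \<and> size Ps \<le> 1 then Some (C, {#I, I#})
     else if I = {} then Some (C, Ps) else Some (C, {#I, I#} + Ps))"
    unfolding can_big[OF big] Let_def I_def Ps_def by simp
  have PsP: "\<And>P. P \<in># Ps \<Longrightarrow> P \<noteq> {} \<and> P \<inter> I = {} \<and> P \<inter> C = {}"
    unfolding Ps_def using pu unfolding pure_def by auto
  have key: "size (filter_mset (\<lambda>P. x \<in> P) Ps) \<le> 1" if xI: "x \<notin> I" for x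
  proof -
    have "filter_mset (\<lambda>P. x \<in> P) Ps = filter_mset (\<lambda>P. x \<in> P) (image_mset (\<lambda>Q. Q - I) M)"
      unfolding Ps_def filter_filter_mset by (intro filter_mset_cong) auto
    also have "\<dots> = image_mset (\<lambda>Q. Q - I) (filter_mset (\<lambda>Q. x \<in> Q - I) M)"
      by (rule filter_mset_image_mset)
    also have "filter_mset (\<lambda>Q. x \<in> Q - I) M = filter_mset (\<lambda>Q. x \<in> Q) M"
      using xI by (intro filter_mset_cong) auto
    finally have "size (filter_mset (\<lambda>P. x \<in> P) Ps) = size (filter_mset (\<lambda>Q. x \<in> Q) M)" by simp
    moreover have "\<not> size (filter_mset (\<lambda>Q. x \<in> Q) M) \<ge> 2" using xI unfolding I_def II_def by simp
    ultimately show ?thesis by simp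
  qed
  have cnt1: "count Ps P \<le> 1" for P
  proof (rule ccontr)
    assume c: "\<not> count Ps P \<le> 1"
    then have "count Ps P > 0" by linarith
    then have "P \<in># Ps" by (metis count_greater_zero_iff)
    then obtain x where x: "x \<in> P" "x \<notin> I" using PsP by blast
    have "count (filter_mset (\<lambda>P. x \<in> P) Ps) P = count Ps P" using x by simp
    then have "count Ps P \<le> size (filter_mset (\<lambda>P. x \<in> P) Ps)" by (metis count_le_size)
    then show False using key[OF x(2)] c by simp
  qed
  have disj: "P \<inter> P' = {}" if "P \<in># Ps" "P' \<in># Ps" "P \<noteq> P'" for P P'
  proof (rule ccontr)
    assume "P \<inter> P' \<noteq> {}"
    then obtain x where x: "x \<in> P" "x \<in> P'" by blast
    have xI: "x \<notin> I" using PsP[OF that(1)] x by blast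
    have "{P, P'} \<subseteq> set_mset (filter_mset (\<lambda>P. x \<in> P) Ps)" using that x by auto
    then have "card {P, P'} \<le> card (set_mset (filter_mset (\<lambda>P. x \<in> P) Ps))" by (intro card_mono) auto
    also have "\<dots> \<le> size (filter_mset (\<lambda>P. x \<in> P) Ps)" by (rule card_set_le_size)
    finally show False using key[OF xI] that(3) by simp
  qed
  have PsEq: "mset_set (set_mset Ps) = Ps" by (rule dist_mset[OF cnt1])
  have cardPs: "card (set_mset Ps) = size Ps" by (metis PsEq size_mset_set)
  have IC: "I \<inter> C = {}" using II_sub[of M] pu unfolding I_def pure_def by blast
  have shpPs: "finite (set_mset Ps) \<and> (\<forall>P\<in>set_mset Ps. P \<noteq> {} \<and> P \<inter> I = {}) \<and>
      (\<forall>P\<in>set_mset Ps. \<forall>P'\<in>set_mset Ps. P \<noteq> P' \<longrightarrow> P \<inter> P' = {})"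
    using PsP disj by auto
  show ?thesis
  proof (cases "I \<noteq> {} \<and> size Ps \<le> 1")
    case True
    have "shp I {} {#I, I#}" unfolding shp_def using True by simp
    moreover have "pure C {#I, I#}" unfolding pure_def using True IC by simp
    ultimately show ?thesis using cn True unfolding good_def by auto
  next
    case c2: False
    show ?thesis
    proof (cases "I = {}")
      case True
      have "Ps = M"
      proof -
        have "Ps = filter_mset (\<lambda>P. P \<noteq> {}) M" unfolding Ps_def True by simp
        also have "\<dots> = M" using pu unfolding pure_def by (intro multiset_eqI) (auto simp: not_in_iff)
        finally show ?thesis .
      qed
      then have sz: "size Ps \<ge> 2" using big by simp
      have "shp I (set_mset Ps) Ps" unfolding shp_def using shpPs True sz cardPs PsEq by simp
      moreover have "pure C Ps" unfolding pure_def using PsP by blast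
      ultimately show ?thesis using cn True sz unfolding good_def by auto
    next
      case False
      then have sz: "size Ps \<ge> 2" using c2 by simp
      have "shp I (set_mset Ps) ({#I, I#} + Ps)" unfolding shp_def using shpPs False sz cardPs PsEq by simp
      moreover have "pure C ({#I, I#} + Ps)" unfolding pure_def using PsP IC False by auto
      ultimately show ?thesis using cn False sz unfolding good_def by auto
    qed
  qed
qed


definition T :: "cmi option \<Rightarrow> nat set \<Rightarrow> bool" where
  "T G D = (case G of None \<Rightarrow> True | Some K \<Rightarrow> fst K \<inter> D \<noteq> {} \<or> cnt (snd K) D \<le> 1)"

lemma cnt_all:
  assumes "pure C M" shows "cnt M (- C) = size M"
proof -
  have "filter_mset (\<lambda>Q. Q \<inter> - C \<noteq> {}) M = M"
  proof (rule multiset_eqI)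
    fix Q show "count (filter_mset (\<lambda>Q. Q \<inter> - C \<noteq> {}) M) Q = count M Q"
    proof (cases "Q \<in># M")
      case True
      then have "Q \<inter> - C \<noteq> {}" using assms unfolding pure_def by blast
      then show ?thesis by simp
    next
      case False then show ?thesis by (simp add: not_in_iff)
    qed
  qed
  then show ?thesis unfolding cnt_def by simp
qed

lemma T_false:
  assumes "good (Some (C, M))" shows "\<not> T (Some (C, M)) (- C)"
proof -
  have "pure C M" "size M \<ge> 2" using assms unfolding good_def by auto
  then show ?thesis unfolding T_def using cnt_all by simp
qed

lemma shp_sub:
  assumes "shp I PP M" "pure C M"
  shows "I \<subseteq> - C" "\<Union>PP \<subseteq> - C"
proof -
  have fin: "finite PP" by (rule shp_fin[OF assms(1)])
  have M: "M = (if I = {} then mset_set PP else {#I, I#} + mset_set PP)" by (rule shp_M[OF assms(1)])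
  have "\<And>P. P \<in> PP \<Longrightarrow> P \<in># M" using fin M by (cases "I = {}") auto
  then show "\<Union>PP \<subseteq> - C" using assms(2) unfolding pure_def by blast
  have "I \<noteq> {} \<Longrightarrow> I \<in># M" using M by simp
  then show "I \<subseteq> - C" using assms(2) unfolding pure_def by blast
qed

lemma good_unique:
  assumes g: "good G" "good G'" and TT: "\<And>D. T G D = T G' D"
  shows "G = G'"
proof (cases G)
  case None
  show ?thesis
  proof (cases G')
    case None then show ?thesis using \<open>G = None\<close> by simp
  next
    case (Some K')
    obtain C' M' where K': "K' = (C', M')" by fastforce
    have "\<not> T G' (- C')" using T_false g(2) Some K' by simp
    moreover have "T G (- C')" using None unfolding T_def by simp
    ultimately show ?thesis using TT by blast
  qed
next
  case (Some K)
  obtain C M where K: "K = (C, M)" by fastforce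
  show ?thesis
  proof (cases G')
    case None
    have "\<not> T G (- C)" using T_false g(1) Some K by simp
    moreover have "T G' (- C)" using None unfolding T_def by simp
    ultimately show ?thesis using TT by blast
  next
    case (Some K')
    obtain C' M' where K': "K' = (C', M')" by fastforce
    have gG: "size M \<ge> 2" "pure C M" "\<exists>I PP. shp I PP M" using g(1) \<open>G = Some K\<close> K unfolding good_def by auto
    have gG': "size M' \<ge> 2" "pure C' M'" "\<exists>I PP. shp I PP M'" using g(2) Some K' unfolding good_def by auto
    have CC: "C = C'"
    proof (rule ccontr)
      assume "C \<noteq> C'"
      then obtain c where "(c \<in> C \<and> c \<notin> C') \<or> (c \<in> C' \<and> c \<notin> C)" by blast
      then show False
      proof
        assume c: "c \<in> C \<and> c \<notin> C'"
        have "\<not> T G' (- C')" using T_false g(2) Some K' by simp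
        moreover have "T G (- C')" using \<open>G = Some K\<close> K c unfolding T_def by auto
        ultimately show False using TT by blast
      next
        assume c: "c \<in> C' \<and> c \<notin> C"
        have "\<not> T G (- C)" using T_false g(1) \<open>G = Some K\<close> K by simp
        moreover have "T G' (- C)" using Some K' c unfolding T_def by auto
        ultimately show False using TT by blast
      qed
    qed
    obtain I PP where s1: "shp I PP M" using gG by blast
    obtain I' PP' where s2: "shp I' PP' M'" using gG' by blast
    have TW: "(cnt M D \<le> 1) = (cnt M' D \<le> 1)" if "D \<subseteq> - C" for D
    proof -
      have "C \<inter> D = {}" using that by blast
      then show ?thesis using TT[of D] \<open>G = Some K\<close> Some K K' CC unfolding T_def by simp
    qed
    have "M = M'"
      using shp_unique[OF s1 s2 shp_sub(1)[OF s1 gG(2)] _ shp_sub(2)[OF s1 gG(2)] _ TW]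
        shp_sub[OF s2 gG'(2)] CC by simp
    then show ?thesis using \<open>G = Some K\<close> Some K K' CC by simp
  qed
qed


definition pD :: "nat set \<Rightarrow> jdist" where
  "pD D = map_pmf (\<lambda>b. \<lambda>i. if i \<in> D \<and> b then 1 else 0) (bernoulli_pmf (1/2))"

lemma ent_map_inj: "inj f \<Longrightarrow> entropy_pmf (map_pmf f q) = entropy_pmf q"
  unfolding entropy_pmf_def by (simp add: pmf_map_inj')

lemma ent_return: "entropy_pmf (return_pmf c) = 0"
  unfolding entropy_pmf_def by simp

lemma ent_bern: "entropy_pmf (bernoulli_pmf (1/2)) = 1"
proof -
  have "- log 2 (1/2::real) = 1" by (simp add: log_divide)
  then show ?thesis unfolding entropy_pmf_def by simp
qed

lemma ent_pD: "entropy_pmf (marg (pD D) A) = (if A \<inter> D \<noteq> {} then 1 else 0)"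
proof -
  define g where "g = (\<lambda>b::bool. restrict (\<lambda>i::nat. if i \<in> D \<and> b then 1 else (0::nat)) A)"
  have m: "marg (pD D) A = map_pmf g (bernoulli_pmf (1/2))"
    unfolding marg_def pD_def g_def by (simp add: map_pmf_comp)
  show ?thesis
  proof (cases "A \<inter> D \<noteq> {}")
    case True
    then obtain i where i: "i \<in> A" "i \<in> D" by blast
    have gi: "g b i = (if b then 1 else 0)" for b unfolding g_def using i by simp
    have "inj g"
    proof (rule injI)
      fix a b assume "g a = g b"
      then have "g a i = g b i" by simp
      then show "a = b" using gi[of a] gi[of b] by (cases a; cases b) simp_all
    qed
    then show ?thesis using True m ent_bern by (simp add: ent_map_inj)
  next
    case False
    then have "g = (\<lambda>_. restrict (\<lambda>_. 0) A)" unfolding g_def by (auto simp: fun_eq_iff restrict_def)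
    then show ?thesis using False m by (simp add: ent_return)
  qed
qed

lemma H_pD: "H (pD D) A = (if A \<inter> D \<noteq> {} then 1 else 0)"
  unfolding H_def ent_pD by simp

lemma adm_pD: "admissible n (pD D)"
  unfolding admissible_def ent_pD by simp

lemma sum_ind: "(\<Sum>Q\<in>#M. (if P Q then 1 else 0 :: real)) = real (size (filter_mset P M))"
  by (induction M) auto

lemma valid_pD: "valid (pD D) K \<longleftrightarrow> T (Some K) D"
proof -
  obtain C M where K: "K = (C, M)" by fastforce
  show ?thesis
  proof (cases "C \<inter> D \<noteq> {}")
    case True
    have h: "H (pD D) (A \<union> C) = 1" for A
    proof -
      have "(A \<union> C) \<inter> D \<noteq> {}" using True by blast
      then show ?thesis unfolding H_pD by (rule if_P)
    qed
    have mi: "MI (\<lambda>A. H (pD D) (A \<union> C)) M = 0" unfolding MI_def h by simp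
    have "T (Some K) D" using True unfolding K T_def by simp
    then show ?thesis using mi unfolding K valid_MI by simp
  next
    case False
    then have e: "\<And>A. ((A \<union> C) \<inter> D \<noteq> {}) = (A \<inter> D \<noteq> {})" by blast
    have "MI (\<lambda>A. H (pD D) (A \<union> C)) M = real (cnt M D) - (if \<Union>(set_mset M) \<inter> D \<noteq> {} then 1 else 0)"
      unfolding MI_def H_pD e cnt_def by (simp add: sum_ind)
    moreover have "(\<Union>(set_mset M) \<inter> D \<noteq> {}) = (cnt M D \<noteq> 0)"
    proof -
      have "(cnt M D \<noteq> 0) = (filter_mset (\<lambda>Q. Q \<inter> D \<noteq> {}) M \<noteq> {#})" unfolding cnt_def by simp
      also have "\<dots> = (\<exists>Q. Q \<in># M \<and> Q \<inter> D \<noteq> {})" by simp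
      also have "\<dots> = (\<Union>(set_mset M) \<inter> D \<noteq> {})" by blast
      finally show ?thesis by simp
    qed
    ultimately have "(MI (\<lambda>A. H (pD D) (A \<union> C)) M = 0) = (cnt M D \<le> 1)" by auto
    then show ?thesis using False unfolding K valid_MI T_def by simp
  qed
qed

definition validO :: "jdist \<Rightarrow> cmi option \<Rightarrow> bool" where
  "validO p G = (case G of None \<Rightarrow> True | Some K \<Rightarrow> valid p K)"

lemma validO_pD: "validO (pD D) G = T G D"
  unfolding validO_def using valid_pD by (cases G) (auto simp: T_def)

lemma can_fst: "can (C, M) = Some K \<Longrightarrow> fst K = C"
  unfolding can_def Let_def by (auto split: if_splits)

lemma valid_can:
  assumes "admissible n p" "C \<subseteq> {1..n}" "\<forall>Q\<in>#M. Q \<subseteq> {1..n}"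
  shows "valid p (C, M) \<longleftrightarrow> validO p (can (C, M))"
proof -
  have pmf: "pm {1..n} (\<lambda>A. H p (A \<union> C))" by (rule pm_shift[OF pm_H[OF assms(1)] assms(2)])
  have "valid p (C, M) \<longleftrightarrow> canok (\<lambda>A. H p (A \<union> C)) (can (C, M))"
    unfolding valid_MI by (rule MI_can[OF pmf _ assms(3)]) simp
  also have "\<dots> \<longleftrightarrow> validO p (can (C, M))"
  proof (cases "can (C, M)")
    case None then show ?thesis unfolding canok_def validO_def by simp
  next
    case (Some K)
    then have "fst K = C" by (rule can_fst)
    then have KK: "K = (C, snd K)" by (metis prod.collapse)
    have "canok (\<lambda>A. H p (A \<union> C)) (Some K) = (MI (\<lambda>A. H p (A \<union> C)) (snd K) = 0)"
      by (simp add: canok_def)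
    moreover have "validO p (Some K) = valid p (C, snd K)" using KK by (simp add: validO_def)
    ultimately show ?thesis using Some valid_MI[of p C "snd K"] by simp
  qed
  finally show ?thesis .
qed

lemma valid_pur: "valid p (pur K) \<longleftrightarrow> valid p K"
proof -
  obtain C M where K: "K = (C, M)" by fastforce
  define f where "f = (\<lambda>A. H p (A \<union> C))"
  have "MI f (filter_mset (\<lambda>Q. Q \<noteq> {}) (image_mset (\<lambda>Q. Q - C) M)) = MI f (image_mset (\<lambda>Q. Q - C) M)"
    by (rule MI_filter)
  also have "\<dots> = MI f M"
  proof -
    have "image_mset (\<lambda>Q. f (Q - C) - f {}) M = image_mset (\<lambda>Q. f Q - f {}) M"
      unfolding f_def by (intro image_mset_cong) (simp add: Un_Diff_cancel2)
    moreover have "\<Union>(set_mset (image_mset (\<lambda>Q. Q - C) M)) = \<Union>(set_mset M) - C" by auto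
    moreover have "f (\<Union>(set_mset M) - C) = f (\<Union>(set_mset M))" unfolding f_def by (simp add: Un_Diff_cancel2)
    ultimately show ?thesis unfolding MI_def by (simp add: image_mset.compositionality comp_def)
  qed
  finally show ?thesis unfolding K pur_def valid_MI f_def by simp
qed

lemma pur_props:
  assumes "is_cmi n K"
  shows "fst (pur K) \<subseteq> {1..n}" "\<forall>Q\<in>#snd (pur K). Q \<subseteq> {1..n}" "pure (fst (pur K)) (snd (pur K))"
proof -
  show "fst (pur K) \<subseteq> {1..n}" using assms unfolding is_cmi_def pur_def by simp
  show "\<forall>Q\<in>#snd (pur K). Q \<subseteq> {1..n}" using assms unfolding is_cmi_def pur_def by force
  show "pure (fst (pur K)) (snd (pur K))" unfolding pur_def pure_def by force
qed

lemma valid_K_can: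
  assumes "is_cmi n K" "admissible n p"
  shows "valid p K \<longleftrightarrow> validO p (can (pur K))"
proof -
  have "valid p K \<longleftrightarrow> valid p (fst (pur K), snd (pur K))" using valid_pur by simp
  also have "\<dots> \<longleftrightarrow> validO p (can (fst (pur K), snd (pur K)))"
    using pur_props[OF assms(1)] by (intro valid_can[OF assms(2)]) auto
  finally show ?thesis by simp
qed

theorem mainTheorem2:
  fixes n :: nat and K K' :: cmi
  assumes "is_cmi n K" and "is_cmi n K'"
  shows "cmi_equiv n K K' \<longleftrightarrow> can (pur K) = can (pur K')"
proof
  assume eq: "cmi_equiv n K K'"
  have g1: "good (can (pur K))"
    using good_can[OF pur_props(3)[OF assms(1)]] by simp
  have g2: "good (can (pur K'))"
    using good_can[OF pur_props(3)[OF assms(2)]] by simp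
  have "T (can (pur K)) D = T (can (pur K')) D" for D
  proof -
    have "T (can (pur K)) D = valid (pD D) K"
      using valid_K_can[OF assms(1) adm_pD] validO_pD by simp
    also have "\<dots> = valid (pD D) K'" using eq adm_pD unfolding cmi_equiv_def by blast
    also have "\<dots> = T (can (pur K')) D"
      using valid_K_can[OF assms(2) adm_pD] validO_pD by simp
    finally show ?thesis .
  qed
  then show "can (pur K) = can (pur K')" by (rule good_unique[OF g1 g2])
next
  assume eq: "can (pur K) = can (pur K')"
  show "cmi_equiv n K K'"
    unfolding cmi_equiv_def
    using valid_K_can[OF assms(1)] valid_K_can[OF assms(2)] eq by simp
qed

end
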